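(* Let $s,m$ be positive integers with $n=sm$ odd, and let $k$ be a positive integer with $\gcd(n,k)=1$. Fix $\alpha\in\mathbb{F}_{2^s}\setminus\{0\}$ and let \[ G(x)=x^{2^k+1}+\alpha+\alpha(x^{2^s}+x)^{2^n-1}=\begin{cases}x^{2^k+1}+\alpha, & x\in\mathbb{F}_{2^s},\\ x^{2^k+1}, & x\notin\mathbb{F}_{2^s},\end{cases} \] as a function $\mathbb{F}_{2^n}\to\mathbb{F}_{2^n}$. Then $\delta_{G,c}\leq 6$ for every $c\in\mathbb{F}_{2^s}\setminus\{1\}$. Moreover, if $3\nmid m$, then $\delta_{G,c}\leq 5$ for every $c\in\mathbb{F}_{2^s}\setminus\{1\}$.
   Context: For $F:\mathbb{F}_{2^n}\to\mathbb{F}_{2^n}$ and $c\in\mathbb{F}_{2^n}$, let ${}_c\Delta_F(a,b)=\#\{x\in\mathbb{F}_{2^n}: F(x+a)-cF(x)=b\}$ and the $c$-differential uniformity is $\delta_{F,c}=\max\{{}_c\Delta_F(a,b): a,b\in\mathbb{F}_{2^n},\ a\neq 0\text{ if } c=1\}$. *)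

theory Defs
  imports Main
begin

definition c_delta :: "('a::{field,finite} \<Rightarrow> 'a) \<Rightarrow> 'a \<Rightarrow> 'a \<Rightarrow> 'a \<Rightarrow> nat" where
  "c_delta F c a b = card {x. F (x + a) - c * F x = b}"

definition c_diff_unif :: "('a::{field,finite} \<Rightarrow> 'a) \<Rightarrow> 'a \<Rightarrow> nat" where
  "c_diff_unif F c = Max {c_delta F c a b | a b. a \<noteq> 0 \<or> c \<noteq> 1}"

text \<open>The subfield F_{2^s} of a field with 2^n elements (s dividing n): fixed points of x \<mapsto> x^(2^s).\<close>
definition subfield2 :: "nat \<Rightarrow> 'a::field set" where
  "subfield2 s = {x. x ^ (2 ^ s) = x}"

end

theory Submission imports Defs "HOL-Number_Theory.Residues" "HOL-Computational_Algebra.Primes" begin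

lemma char2:
  fixes dummy :: "'a::{field,finite}"
  assumes "card (UNIV :: 'a set) = 2 ^ n" "n > 0"
  shows "(2::'a) = 0"
proof -
  have "CHAR('a) dvd 2 ^ n" using CHAR_dvd_CARD[where 'a='a] assms by simp
  moreover have "prime CHAR('a)"
    by (intro prime_CHAR_semidom finite_imp_CHAR_pos) simp
  ultimately have "CHAR('a) dvd 2" using prime_dvd_power by blast
  hence "CHAR('a) = 2" using \<open>prime CHAR('a)\<close>
    by (metis prime_nat_iff two_is_prime_nat not_prime_1)
  hence "of_nat 2 = (0::'a)" by (metis of_nat_CHAR)
  thus ?thesis by simp
qed

lemma field_pow_card:
  fixes x :: "'a::{field,finite}"
  shows "x ^ card (UNIV :: 'a set) = x"
proof (cases "x = 0")
  case False
  have "x * (\<Prod>y\<in>UNIV-{0}. x * y) = x * x ^ (card (UNIV :: 'a set) - 1) * \<Prod>(UNIV-{0})"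
    by (simp add: prod.distrib mult_ac)
  also have "x * x ^ (card (UNIV :: 'a set) - 1) = x ^ Suc (card (UNIV :: 'a set) - 1)"
    by (subst power_Suc) auto
  also have "Suc (card (UNIV :: 'a set) - 1) = card (UNIV :: 'a set)"
    using finite_UNIV_card_ge_0[where ?'a = 'a] by simp
  also have "(\<Prod>y\<in>UNIV-{0}. x * y) = (\<Prod>y\<in>UNIV-{0}. y)"
    by (rule prod.reindex_bij_witness[of _ "\<lambda>y. y / x" "\<lambda>y. x * y"]) (use False in auto)
  finally show ?thesis
    by simp
qed (use finite_UNIV_card_ge_0[where ?'a = 'a] in auto)

lemma neg2: fixes x :: "'a::field" assumes "(2::'a) = 0" shows "- x = x"
proof -
  have "x + x = 2 * x" by simp
  hence "x + x = 0" using assms by simp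
  thus ?thesis by (simp add: add_eq_0_iff2 eq_neg_iff_add_eq_0)
qed

lemma minus2: fixes x y :: "'a::field" assumes "(2::'a) = 0" shows "x - y = x + y"
  using neg2[OF assms, of y] by (metis diff_conv_add_uminus)

lemma frob_add: fixes x y :: "'a::field" assumes "(2::'a) = 0"
  shows "(x+y)^(2^j) = x^(2^j) + y^(2^j)"
proof (induction j)
  case 0 then show ?case by simp
next
  case (Suc j)
  have "(x+y)^(2^Suc j) = ((x+y)^(2^j))^2" by (simp add: power_mult[symmetric] mult.commute)
  also have "... = (x^(2^j) + y^(2^j))^2" using Suc by simp
  also have "... = (x^(2^j))^2 + (y^(2^j))^2"
    by (simp add: power2_sum assms)
  also have "... = x^(2^Suc j) + y^(2^Suc j)" by (simp add: power_mult[symmetric] mult.commute)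
  finally show ?case .
qed

lemma frob_inj: fixes x y :: "'a::field" assumes "(2::'a) = 0" "x^(2^j) = y^(2^j)" shows "x = y"
proof -
  have "(x+y)^(2^j) = 0" using frob_add[OF assms(1)] assms(2) neg2[OF assms(1)]
    by (metis add_eq_0_iff2 eq_neg_iff_add_eq_0)
  hence "x + y = 0" by simp
  thus ?thesis using neg2[OF assms(1), of y] by (metis add_eq_0_iff2)
qed

lemma pow_comm: "((x::'a::monoid_mult)^r)^N = (x^N)^r"
  by (simp add: power_mult[symmetric] mult.commute)

lemma pow_iter: "(x::'a::monoid_mult)^p = x \<Longrightarrow> x^(p^u) = x"
  by (induction u) (simp_all add: power_mult)

lemma frob_gcd:
  fixes x :: "'a::monoid_mult"
  assumes "x^(2^(s*d)) = x" "x^(2^(s*m)) = x" "coprime d m" "d > 0"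
  shows "x^(2^s) = x"
proof -
  obtain u v where uv: "d * u = m * v + gcd d m" using bezout_nat[of d m] assms(4) by auto
  hence uv: "d * u = m * v + 1" using assms(3) by simp
  have e: "s*d*u = s*m*v + s"
  proof -
    have "s*(d*u) = s*(m*v+1)" by (simp add: uv)
    thus ?thesis by (simp add: algebra_simps)
  qed
  have "x^((2^(s*d))^u) = x" using pow_iter[OF assms(1)] .
  moreover have "((2::nat)^(s*d))^u = (2^(s*m))^v * 2^s"
    by (simp only: power_mult[symmetric] power_add[symmetric] e)
  ultimately have "x^((2^(s*m))^v * 2^s) = x" by metis
  hence "(x^((2^(s*m))^v))^(2^s) = x" by (simp add: power_mult)
  thus ?thesis using pow_iter[OF assms(2)] by simp
qed

lemma card_minus_le: fixes Z :: "'a::finite set" assumes "z1 \<in> Z" "card (Z - {z1}) \<le> r" shows "card Z \<le> r + 1"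
proof -
  have "card Z = card (Z - {z1}) + 1" using assms(1)
    by (metis card_Suc_Diff1 finite Suc_eq_plus1)
  thus ?thesis using assms(2) by simp
qed

lemma affine2:
  fixes A B C :: "'a::{field,finite}"
  assumes two: "(2::'a) = 0" and fq: "\<forall>t::'a. t^(2^n) = t" and cop: "coprime k n" and kpos: "k > 0"
    and A: "A \<noteq> 0"
  shows "card {z. A + B*z + C*z^(2^k) = 0} \<le> 2"
proof (cases "{z. A + B*z + C*z^(2^k) = 0} = {}")
  case True then show ?thesis by simp
next
  case False
  define Z where "Z = {z. A + B*z + C*z^(2^k) = 0}"
  then obtain z1 where z1: "z1 \<in> Z" using False by auto
  have key: "w = w'" if w: "w \<noteq> 0" "B*w + C*w^(2^k) = 0" and w': "w' \<noteq> 0" "B*w' + C*w'^(2^k) = 0" for w w'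
  proof -
    have C: "C \<noteq> 0"
    proof
      assume "C = 0"
      hence "B = 0" using w by simp
      hence "A = 0" using z1 \<open>C = 0\<close> unfolding Z_def by (simp split: if_splits)
      thus False using A by simp
    qed
    have B: "B \<noteq> 0"
    proof
      assume "B = 0"
      hence "w^(2^k) = 0" using w C by simp
      thus False using w by simp
    qed
    have ew: "w^(2^k) = - B*w/C" using w C by (simp add: field_simps eq_neg_iff_add_eq_0)
    have ew': "w'^(2^k) = - B*w'/C" using w' C by (simp add: field_simps eq_neg_iff_add_eq_0)
    define t where "t = w / w'"
    have "t^(2^k) = w^(2^k)/w'^(2^k)" unfolding t_def by (simp add: power_divide)
    also have "... = t" unfolding ew ew' t_def using B C w w' by (simp add: field_simps)
    finally have t1: "t^(2^(1*k)) = t" by simp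
    have t2: "t^(2^(1*n)) = t" using fq by simp
    have "t^(2^1) = t" using frob_gcd[OF t1 t2 cop kpos] .
    hence "t * (t - 1) = 0" by (simp add: algebra_simps power2_eq_square)
    moreover have "t \<noteq> 0" unfolding t_def using w w' by simp
    ultimately have "t = 1" by simp
    thus ?thesis unfolding t_def using w' by simp
  qed
  have "\<forall>u\<in>Z-{z1}. \<forall>v\<in>Z-{z1}. u = v"
  proof (intro ballI)
    fix u v assume u: "u \<in> Z-{z1}" and v: "v \<in> Z-{z1}"
    have gen: "B*(x - z1) + C*(x - z1)^(2^k) = 0" if "x \<in> Z" for x
    proof -
      have "(x - z1)^(2^k) = x^(2^k) - z1^(2^k)"
        using frob_add[OF two] minus2[OF two] by metis
      moreover have "A + B*x + C*x^(2^k) = 0" "A + B*z1 + C*z1^(2^k) = 0" using that z1 unfolding Z_def by auto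
      moreover have "B*(x - z1) + C*(x^(2^k) - z1^(2^k)) = (A + B*x + C*x^(2^k)) - (A + B*z1 + C*z1^(2^k))"
        by (simp add: algebra_simps)
      ultimately show ?thesis by simp
    qed
    have "u - z1 = v - z1" using key[OF _ gen _ gen] u v by auto
    thus "u = v" by simp
  qed
  hence "card (Z - {z1}) \<le> 1" using card_le_Suc0_iff_eq[of "Z - {z1}"] by simp
  hence "card Z \<le> 1 + 1" using card_minus_le[OF z1] by blast
  thus ?thesis unfolding Z_def by simp
qed

lemma diff_ident:
  fixes x0 y a c :: "'a::field"
  assumes f1: "(x0+a+y)^q = (x0+a)^q + y^q" and f2: "(x0+y)^q = x0^q + y^q" and f3: "(x0+a)^q = x0^q + a^q"
  shows "((x0+y+a)^(q+1) + c*(x0+y)^(q+1)) - ((x0+a)^(q+1) + c*x0^(q+1))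
     = (1+c)*y^(q+1) + ((1+c)*x0 + a)*y^q + ((1+c)*x0^q + a^q)*y"
proof -
  have e: "x0+y+a = x0+a+y" by simp
  show ?thesis unfolding e power_add power_one_right f1 f2 f3 by (simp add: algebra_simps)
qed

lemma recip_ident:
  fixes y z A B C :: "'a::field"
  assumes "y * z = 1"
  shows "z^(q+1) * (A*y^(q+1) + B*y^q + C*y) = A + B*z + C*z^q"
proof -
  have "z^(q+1) * (A*y^(q+1) + B*y^q + C*y) = A*(y*z)^(q+1) + B*(y*z)^q*z + C*(y*z)*z^q"
    by (simp add: power_mult_distrib algebra_simps)
  thus ?thesis using assms by simp
qed

lemma roots3:
  fixes a b c :: "'a::{field,finite}"
  assumes two: "(2::'a) = 0" and fq: "\<forall>t::'a. t^(2^n) = t" and cop: "coprime k n" and kpos: "k > 0"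
    and c: "c \<noteq> 1"
  shows "card {x. (x+a)^(2^k+1) + c*x^(2^k+1) = b} \<le> 3"
proof (cases "{x. (x+a)^(2^k+1) + c*x^(2^k+1) = b} = {}")
  case True then show ?thesis by simp
next
  case False
  define q where "q = (2::nat)^k"
  define R where "R = {x. (x+a)^(q+1) + c*x^(q+1) = b}"
  obtain x0 where x0: "x0 \<in> R" using False unfolding R_def q_def by auto
  define A where "A = 1 + c"
  define B where "B = (1+c)*x0 + a"
  define C where "C = (1+c)*x0^q + a^q"
  have A: "A \<noteq> 0"
  proof
    assume "A = 0"
    hence "c = - 1" unfolding A_def by (simp add: eq_neg_iff_add_eq_0 add.commute)
    thus False using c neg2[OF two, of 1] by simp
  qed
  define Z where "Z = {z. A + B*z + C*z^(2^k) = 0}"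
  have cZ: "card Z \<le> 2" unfolding Z_def by (rule affine2[OF two fq cop kpos A])
  define f where "f = (\<lambda>x. 1 / (x + x0))"
  have inj: "inj_on f (R - {x0})"
  proof (rule inj_onI)
    fix x x' assume "x \<in> R - {x0}" "x' \<in> R - {x0}" "f x = f x'"
    hence "x + x0 = x' + x0" unfolding f_def by simp
    thus "x = x'" by simp
  qed
  have sub: "f ` (R - {x0}) \<subseteq> Z"
  proof
    fix z assume "z \<in> f ` (R - {x0})"
    then obtain x where x: "x \<in> R" "x \<noteq> x0" and z: "z = f x" by auto
    define y where "y = x + x0"
    have y0: "y \<noteq> 0"
    proof
      assume "y = 0"
      hence "x = - x0" unfolding y_def by (simp add: eq_neg_iff_add_eq_0)
      thus False using x neg2[OF two, of x0] by simp
    qed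
    have xy: "x = x0 + y" unfolding y_def using neg2[OF two, of x0]
      by (metis add.commute add.left_commute ab_left_minus add_0_right) 
    have f1: "(x0+a+y)^q = (x0+a)^q + y^q" and f2: "(x0+y)^q = x0^q + y^q" and f3: "(x0+a)^q = x0^q + a^q"
      unfolding q_def using frob_add[OF two] by auto
    have "((x0+y+a)^(q+1) + c*(x0+y)^(q+1)) - ((x0+a)^(q+1) + c*x0^(q+1)) = 0"
      using x(1) x0 unfolding R_def xy by simp
    hence E: "A*y^(q+1) + B*y^q + C*y = 0" unfolding diff_ident[OF f1 f2 f3] A_def B_def C_def .
    have yz: "y * z = 1" unfolding z f_def y_def[symmetric] using y0 by simp
    have "A + B*z + C*z^q = 0" using recip_ident[OF yz, of q A B C] E by simp
    thus "z \<in> Z" unfolding Z_def q_def by simp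
  qed
  have "card (R - {x0}) \<le> 2"
    using card_inj_on_le[OF inj sub] cZ by simp
  hence "card R \<le> 2 + 1" by (rule card_minus_le[OF x0])
  thus ?thesis unfolding R_def q_def by simp
qed

lemma t_one: fixes t :: "'a::field" assumes "t^(2^1) = t" "t \<noteq> 0" shows "t = 1"
proof -
  have "t * (t - 1) = 0" using assms(1) by (simp add: algebra_simps power2_eq_square)
  thus ?thesis using assms(2) by simp
qed

lemma pinj:
  fixes x y :: "'a::{field,finite}"
  assumes two: "(2::'a) = 0" and fq: "\<forall>t::'a. t^(2^n) = t" and cop: "coprime k n" and kpos: "k > 0"
    and odd: "odd n" and eq: "x^(2^k+1) = y^(2^k+1)"
  shows "x = y"
proof (cases "y = 0")
  case True then show ?thesis using eq by simp
next
  case False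
  define q where "q = (2::nat)^k"
  define t where "t = x / y"
  have t1: "t^(q+1) = 1" unfolding t_def q_def using eq False by (simp add: power_divide)
  hence t0: "t \<noteq> 0" by (metis zero_neq_one power_0_left add_eq_0_iff_both_eq_0 one_neq_zero)
  have tq: "t^q = 1/t" using t1 t0 by (simp add: field_simps power_add)
  have "t^(2^(1*(2*k))) = (t^q)^q" unfolding q_def by (simp add: power_mult[symmetric] power_add[symmetric] mult_2)
  also have "... = t" unfolding tq by (simp add: power_one_over tq)
  finally have a1: "t^(2^(1*(2*k))) = t" .
  have a2: "t^(2^(1*n)) = t" using fq by simp
  have "coprime (2*k) n" using cop odd by (simp add: coprime_left_2_iff_odd)
  hence "t^(2^1) = t" using frob_gcd[OF a1 a2] kpos by simp
  hence "t = 1" using t_one t0 by blast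
  thus ?thesis unfolding t_def using False by simp
qed

lemma frob_diff: fixes x y :: "'a::field" assumes two: "(2::'a) = 0"
  shows "(x-y)^(2^j) = x^(2^j) - y^(2^j)"
  using frob_add[OF two] minus2[OF two] by metis

lemma frob_poly:
  fixes x a c1 c2 :: "'a::field" assumes two: "(2::'a) = 0"
  assumes "c1^(2^s) = c1" "c2^(2^s) = c2" "x^(2^s) = x"
  shows "(c1*(x+a)^(q+1) + c2*x^(q+1))^(2^s) = c1*(x+a^(2^s))^(q+1) + c2*x^(q+1)"
proof -
  have "(c1*(x+a)^(q+1) + c2*x^(q+1))^(2^s) = c1^(2^s)*((x+a)^(q+1))^(2^s) + c2^(2^s)*(x^(q+1))^(2^s)"
    by (simp add: frob_add[OF two] power_mult_distrib)
  also have "... = c1*((x+a)^(2^s))^(q+1) + c2*(x^(2^s))^(q+1)"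
    by (simp only: assms(2,3) pow_comm[of "x+a" "q+1" "2^s"] pow_comm[of x "q+1" "2^s"])
  also have "... = c1*(x+a^(2^s))^(q+1) + c2*x^(q+1)"
    using assms(4) by (simp add: frob_add[OF two])
  finally show ?thesis .
qed

lemma sroot1:
  fixes a b c1 c2 :: "'a::{field,finite}"
  assumes two: "(2::'a) = 0" and fq: "\<forall>t::'a. t^(2^n) = t" and cop: "coprime k n" and kpos: "k > 0"
    and nsm: "n = s * m" and oddn: "odd n"
    and c1: "c1^(2^s) = c1" and c2: "c2^(2^s) = c2" and a: "a^(2^s) \<noteq> a" and cc: "c1 \<noteq> 0 \<or> c2 \<noteq> 0"
  shows "card {x. x^(2^s) = x \<and> c1*(x+a)^(2^k+1) + c2*x^(2^k+1) = b} \<le> 1"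
proof -
  define q where "q = (2::nat)^k"
  define X where "X = {x. x^(2^s) = x \<and> c1*(x+a)^(q+1) + c2*x^(q+1) = b}"
  have "\<forall>x1\<in>X. \<forall>x2\<in>X. x1 = x2"
  proof (intro ballI)
    fix x1 x2 assume x1: "x1 \<in> X" and x2: "x2 \<in> X"
    show "x1 = x2"
    proof (cases "c1 = 0")
      case True
      hence "c2 \<noteq> 0" using cc by simp
      hence "x1^(2^k+1) = x2^(2^k+1)" using x1 x2 True unfolding X_def q_def by auto
      thus ?thesis using pinj[OF two fq cop kpos oddn] by blast
    next
      case False
      define a' where "a' = a^(2^s)"
      have img: "c1*(x+a')^(q+1) + c2*x^(q+1) = b^(2^s)" if "x \<in> X" for x
        using frob_poly[OF two c1 c2, of x a q] that unfolding X_def a'_def by simp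
      have D: "c1*((x+a)^(q+1) - (x+a')^(q+1)) = b - b^(2^s)" if "x \<in> X" for x
      proof -
        have h: "c1*(x+a)^(q+1) + c2*x^(q+1) = b" using that unfolding X_def by simp
        have "c1*((x+a)^(q+1) - (x+a')^(q+1)) = (c1*(x+a)^(q+1) + c2*x^(q+1)) - (c1*(x+a')^(q+1) + c2*x^(q+1))"
          by (simp add: algebra_simps)
        thus ?thesis unfolding h img[OF that] .
      qed
      have "c1*((x1+a)^(q+1) - (x1+a')^(q+1)) = c1*((x2+a)^(q+1) - (x2+a')^(q+1))"
        using D[OF x1] D[OF x2] by simp
      hence DD: "(x1+a)^(q+1) - (x1+a')^(q+1) = (x2+a)^(q+1) - (x2+a')^(q+1)" using False by simp
      define y where "y = x1 - x2"
      define e where "e = a - a'"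
      have fy: "y^q = x1^q - x2^q" unfolding y_def q_def by (rule frob_diff[OF two])
      have fe: "e^q = a^q - a'^q" unfolding e_def q_def by (rule frob_diff[OF two])
      have f1: "(x1+a)^q = x1^q + a^q" "(x1+a')^q = x1^q + a'^q" "(x2+a)^q = x2^q + a^q" "(x2+a')^q = x2^q + a'^q"
        unfolding q_def using frob_add[OF two] by auto
      have "y^q * e + y * e^q = ((x1+a)^(q+1) - (x1+a')^(q+1)) - ((x2+a)^(q+1) - (x2+a')^(q+1))"
        unfolding fy fe unfolding power_add power_one_right f1 y_def e_def by (simp add: algebra_simps)
      hence yq: "y^q * e + y * e^q = 0" using DD by simp
      have e0: "e \<noteq> 0" unfolding e_def a'_def using a by simp
      show "x1 = x2"
      proof (rule ccontr)
        assume "x1 \<noteq> x2"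
        hence y0: "y \<noteq> 0" unfolding y_def by simp
        define t where "t = y / e"
        have "y^q = - (y * e^q) / e" using yq e0 by (simp add: field_simps eq_neg_iff_add_eq_0)
        hence "t^q = - t" unfolding t_def using e0 by (simp add: power_divide field_simps)
        hence tt1: "t^(2^(1*k)) = t" unfolding q_def using neg2[OF two, of t] by simp
        have tt2: "t^(2^(1*n)) = t" using fq by simp
        have "t^(2^1) = t" using frob_gcd[OF tt1 tt2 cop kpos] .
        moreover have "t \<noteq> 0" unfolding t_def using y0 e0 by simp
        ultimately have "t = 1" using t_one by blast
        hence ye: "y = e" unfolding t_def using e0 by simp
        have "y^(2^s) = y" unfolding y_def using frob_diff[OF two] x1 x2 unfolding X_def by simp
        hence "e^(2^s) = e" using ye by simp
        hence "a' - a'^(2^s) = a - a'" unfolding e_def a'_def using frob_diff[OF two] by metis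
        hence "a'^(2^s) = a" using minus2[OF two] neg2[OF two] 
          by (metis add.assoc add.commute add_diff_cancel_left' diff_add_cancel minus_diff_eq)
        hence ha1: "a^(2^(s*2)) = a" unfolding a'_def by (simp add: power_mult[symmetric] power_add[symmetric] mult_2_right)
        have ha2: "a^(2^(s*m)) = a" using fq nsm by simp
        have "coprime 2 m" using oddn nsm by (simp add: coprime_left_2_iff_odd)
        hence "a^(2^s) = a" using frob_gcd[OF ha1 ha2] by simp
        thus False using a by simp
      qed
    qed
  qed
  hence "card X \<le> Suc 0" using card_le_Suc0_iff_eq[of X] by simp
  thus ?thesis unfolding X_def q_def by simp
qed

lemma frob_poly2:
  fixes x a c1 c2 :: "'a::field" assumes two: "(2::'a) = 0"
  shows "(c1*(x+a)^(q+1) + c2*x^(q+1))^(2^j) = c1^(2^j)*(x^(2^j)+a^(2^j))^(q+1) + c2^(2^j)*(x^(2^j))^(q+1)"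
proof -
  have "(c1*(x+a)^(q+1) + c2*x^(q+1))^(2^j) = c1^(2^j)*((x+a)^(q+1))^(2^j) + c2^(2^j)*(x^(q+1))^(2^j)"
    by (simp add: frob_add[OF two] power_mult_distrib)
  also have "... = c1^(2^j)*((x+a)^(2^j))^(q+1) + c2^(2^j)*(x^(2^j))^(q+1)"
    by (simp only: pow_comm[of "x+a" "q+1" "2^j"] pow_comm[of x "q+1" "2^j"])
  also have "... = c1^(2^j)*(x^(2^j)+a^(2^j))^(q+1) + c2^(2^j)*(x^(2^j))^(q+1)"
    by (simp add: frob_add[OF two])
  finally show ?thesis .
qed

lemma fixS_iter: fixes a :: "'a::monoid_mult" assumes "a^(2^s) = a" shows "a^(2^(s*i)) = a"
proof -
  have "a^((2^s)^i) = a" by (rule pow_iter[OF assms])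
  thus ?thesis by (simp add: power_mult)
qed

lemma rootsS:
  fixes a b c x :: "'a::{field,finite}"
  assumes two: "(2::'a) = 0" and fq: "\<forall>t::'a. t^(2^n) = t" and cop: "coprime k n" and kpos: "k > 0"
    and nsm: "n = s * m" and oddm: "odd m" and m3: "\<not> 3 dvd m" and c: "c \<noteq> 1"
    and aS: "a^(2^s) = a" and bS: "b^(2^s) = b" and cS: "c^(2^s) = c"
    and x: "(x+a)^(2^k+1) + c*x^(2^k+1) = b"
  shows "x^(2^s) = x"
proof -
  define q where "q = (2::nat)^k"
  define R where "R = {x. (x+a)^(q+1) + c*x^(q+1) = b}"
  have cR: "card R \<le> 3" unfolding R_def q_def by (rule roots3[OF two fq cop kpos c])
  define f where "f = (\<lambda>i::nat. x^(2^(s*i)))"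
  have fR: "f i \<in> R" for i
  proof -
    have "((x+a)^(q+1) + c*x^(q+1))^(2^(s*i)) = b^(2^(s*i))" using x unfolding q_def by simp
    hence "(1*(x+a)^(q+1) + c*x^(q+1))^(2^(s*i)) = b" using fixS_iter[OF bS] by simp
    hence "1*(f i + a)^(q+1) + c*(f i)^(q+1) = b"
      unfolding frob_poly2[OF two] f_def using fixS_iter[OF aS] fixS_iter[OF cS] by simp
    thus ?thesis unfolding R_def by simp
  qed
  have "\<not> inj_on f {0..3}"
  proof
    assume "inj_on f {0..3}"
    hence "card (f ` {0..3}) = card {0..(3::nat)}" by (rule card_image)
    hence "card (f ` {0..3}) = 4" by simp
    moreover have "card (f ` {0..3}) \<le> card R" using fR by (intro card_mono) auto
    ultimately show False using cR by simp
  qed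
  then obtain i j where ij: "i \<in> {0..3}" "j \<in> {0..3}" "i \<noteq> j" "f i = f j"
    unfolding inj_on_def by blast
  have "\<exists>i j. i < j \<and> j \<le> 3 \<and> f i = f j"
  proof (cases "i < j")
    case True then show ?thesis using ij by auto
  next
    case False then show ?thesis using ij by (intro exI[of _ j] exI[of _ i]) auto
  qed
  then obtain i j where ij: "i < j" "j \<le> 3" "f i = f j" by blast
  define d where "d = j - i"
  have sj: "s*j = s*d + s*i" unfolding d_def using ij(1) by (simp add: diff_mult_distrib2)
  have "(x^(2^(s*d)))^(2^(s*i)) = x^(2^(s*j))"
    unfolding sj power_add power_mult by simp
  hence "(x^(2^(s*d)))^(2^(s*i)) = x^(2^(s*i))" using ij(3) unfolding f_def by simp
  hence d1: "x^(2^(s*d)) = x" by (rule frob_inj[OF two])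
  have d2: "x^(2^(s*m)) = x" using fq nsm by simp
  have dpos: "d > 0" "d \<le> 3" unfolding d_def using ij by auto
  have "coprime d m"
  proof -
    have "d = 1 \<or> d = 2 \<or> d = 3" using dpos by auto
    moreover have "coprime (3::nat) m" using m3 by (simp add: prime_imp_coprime)
    moreover have "coprime (2::nat) m" using oddm by (simp add: coprime_left_2_iff_odd)
    ultimately show ?thesis by auto
  qed
  thus ?thesis using frob_gcd[OF d1 d2] dpos by simp
qed

lemma ch2_move: fixes u v w :: "'a::field" assumes two: "(2::'a) = 0" and "u + v = w" shows "u = w + v"
proof -
  have "u = w - v" using assms(2) by (simp add: algebra_simps)
  thus ?thesis using minus2[OF two] by simp
qed

lemma ch2_cancel: fixes u a :: "'a::field" assumes two: "(2::'a) = 0" shows "u + a + a = u"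
proof -
  have "u + a + a = u + (a - a)" using minus2[OF two, of a a] by (simp add: add.assoc)
  thus ?thesis by simp
qed

lemma count_bound:
  fixes \<alpha> a b c :: "'a::{field,finite}" and G :: "'a \<Rightarrow> 'a"
  assumes two: "(2::'a) = 0" and fq: "\<forall>t::'a. t^(2^n) = t" and cop: "coprime k n" and kpos: "k > 0"
    and nsm: "n = s * m" and oddn: "odd n"
    and c: "c \<noteq> 1" and cS: "c^(2^s) = c" and alS: "\<alpha>^(2^s) = \<alpha>"
    and Gd: "\<And>x. G x = (if x^(2^s) = x then x^(2^k+1) + \<alpha> else x^(2^k+1))"
  shows "card {x. G(x+a) - c*G x = b} \<le> 6 \<and> (\<not> 3 dvd m \<longrightarrow> card {x. G(x+a) - c*G x = b} \<le> 5)"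
proof -
  define q where "q = (2::nat)^k"
  define T where "T = {x. G(x+a) - c*G x = b}"
  have oddm: "odd m" using oddn nsm by simp
  have Tx: "G(x+a) + c*G x = b" if "x \<in> T" for x
    using that unfolding T_def using minus2[OF two] by simp
  have Gd': "G x = (if x^(2^s) = x then x^(q+1) + \<alpha> else x^(q+1))" for x
    unfolding q_def by (rule Gd)
  define R2 where "R2 = {x. (x+a)^(q+1) + c*x^(q+1) = b}"
  have cR2: "card R2 \<le> 3" unfolding R2_def q_def by (rule roots3[OF two fq cop kpos c])
  have fa: "(x+a)^(2^s) = x^(2^s) + a^(2^s)" for x using frob_add[OF two] .
  show ?thesis
  proof (cases "a^(2^s) = a")
    case aS: True
    define R1 where "R1 = {x. (x+a)^(q+1) + c*x^(q+1) = b + \<alpha> + c*\<alpha>}"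
    have cR1: "card R1 \<le> 3" unfolding R1_def q_def by (rule roots3[OF two fq cop kpos c])
    have in1: "x \<in> R1" if "x \<in> T" "x^(2^s) = x" for x
    proof -
      have "(x+a)^(2^s) = x+a" using fa aS that(2) by simp
      hence "((x+a)^(q+1) + \<alpha>) + c*(x^(q+1) + \<alpha>) = b" using Tx[OF that(1)] Gd' that(2) by simp
      hence "((x+a)^(q+1) + c*x^(q+1)) + (\<alpha> + c*\<alpha>) = b" by (simp add: algebra_simps)
      hence "(x+a)^(q+1) + c*x^(q+1) = b + (\<alpha> + c*\<alpha>)" by (rule ch2_move[OF two])
      thus ?thesis unfolding R1_def by (simp add: add.assoc)
    qed
    have in2: "x \<in> R2" if "x \<in> T" "x^(2^s) \<noteq> x" for x
    proof -
      have "(x+a)^(2^s) \<noteq> x+a" using fa aS that(2) by simp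
      hence "(x+a)^(q+1) + c*x^(q+1) = b" using Tx[OF that(1)] Gd' that(2) by simp
      thus ?thesis unfolding R2_def by simp
    qed
    have "T \<subseteq> R1 \<union> R2" using in1 in2 by blast
    hence "card T \<le> card R1 + card R2" by (metis card_Un_le card_mono finite le_trans)
    hence six: "card T \<le> 6" using cR1 cR2 by simp
    have five: "card T \<le> 5" if m3: "\<not> 3 dvd m"
    proof (cases "b^(2^s) = b")
      case True
      have "T \<subseteq> R1"
      proof
        fix x assume x: "x \<in> T"
        show "x \<in> R1"
        proof (cases "x^(2^s) = x")
          case True then show ?thesis using in1 x by simp
        next
          case False
          have "x \<in> R2" using in2 x False by simp
          hence "(x+a)^(2^k+1) + c*x^(2^k+1) = b" unfolding R2_def q_def by simp
          hence "x^(2^s) = x" using rootsS[OF two fq cop kpos nsm oddm m3 c aS \<open>b^(2^s) = b\<close> cS] by blast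
          thus ?thesis using False by simp
        qed
      qed
      hence "card T \<le> card R1" by (simp add: card_mono)
      thus ?thesis using cR1 by simp
    next
      case False
      have "T \<subseteq> R2"
      proof
        fix x assume x: "x \<in> T"
        show "x \<in> R2"
        proof (cases "x^(2^s) = x")
          case False then show ?thesis using in2 x by simp
        next
          case True
          have h: "(x+a)^(q+1) + c*x^(q+1) = b + \<alpha> + c*\<alpha>" using in1[OF x True] unfolding R1_def by simp
          have "(1*(x+a)^(q+1) + c*x^(q+1))^(2^s) = 1*(x+a)^(q+1) + c*x^(q+1)"
            unfolding frob_poly2[OF two] using True aS cS by simp
          hence "(b + \<alpha> + c*\<alpha>)^(2^s) = b + \<alpha> + c*\<alpha>" using h by simp
          hence "b^(2^s) + \<alpha> + c*\<alpha> = b + \<alpha> + c*\<alpha>"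
            using alS cS by (simp add: frob_add[OF two] power_mult_distrib)
          hence "b^(2^s) = b" by simp
          thus ?thesis using False by simp
        qed
      qed
      hence "card T \<le> card R2" by (simp add: card_mono)
      thus ?thesis using cR2 by simp
    qed
    show ?thesis using six five unfolding T_def by simp
  next
    case aN: False
    define F1 where "F1 = {x. x^(2^s) = x \<and> 1*(x+a)^(2^k+1) + c*x^(2^k+1) = b + c*\<alpha>}"
    define F2 where "F2 = {u. u^(2^s) = u \<and> c*(u+a)^(2^k+1) + 1*u^(2^k+1) = b + \<alpha>}"
    have one: "(1::'a)^(2^s) = 1" by simp
    have cF1: "card F1 \<le> 1" unfolding F1_def
      by (rule sroot1[OF two fq cop kpos nsm oddn one cS aN]) simp
    have cF2: "card F2 \<le> 1" unfolding F2_def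
      by (rule sroot1[OF two fq cop kpos nsm oddn cS one aN]) simp
    have cimg: "card ((\<lambda>u. u + a) ` F2) \<le> 1" using card_image_le[of F2 "\<lambda>u. u + a"] cF2 by simp
    have "T \<subseteq> F1 \<union> (\<lambda>u. u + a) ` F2 \<union> R2"
    proof
      fix x assume x: "x \<in> T"
      show "x \<in> F1 \<union> (\<lambda>u. u + a) ` F2 \<union> R2"
      proof (cases "x^(2^s) = x")
        case True
        have "(x+a)^(2^s) \<noteq> x+a" using fa True aN by simp
        hence "(x+a)^(q+1) + c*(x^(q+1) + \<alpha>) = b" using Tx[OF x] Gd' True by simp
        hence "(1*(x+a)^(q+1) + c*x^(q+1)) + c*\<alpha> = b" by (simp add: algebra_simps)
        hence "1*(x+a)^(q+1) + c*x^(q+1) = b + c*\<alpha>" by (rule ch2_move[OF two])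
        hence "x \<in> F1" unfolding F1_def q_def using True by simp
        thus ?thesis by simp
      next
        case xN: False
        show ?thesis
        proof (cases "(x+a)^(2^s) = x+a")
          case True
          define u where "u = x + a"
          have xu: "x = u + a" unfolding u_def using ch2_cancel[OF two] by simp
          have "u^(q+1) + \<alpha> + c*x^(q+1) = b" using Tx[OF x] Gd' True xN unfolding u_def by simp
          hence "(c*(u+a)^(q+1) + 1*u^(q+1)) + \<alpha> = b" unfolding xu by (simp add: algebra_simps)
          hence "c*(u+a)^(q+1) + 1*u^(q+1) = b + \<alpha>" by (rule ch2_move[OF two])
          hence "u \<in> F2" unfolding F2_def q_def using True u_def by simp
          thus ?thesis using xu by blast
        next
          case False
          have "(x+a)^(q+1) + c*x^(q+1) = b" using Tx[OF x] Gd' False xN by simp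
          thus ?thesis unfolding R2_def by simp
        qed
      qed
    qed
    hence "card T \<le> card (F1 \<union> (\<lambda>u. u + a) ` F2 \<union> R2)" by (simp add: card_mono)
    also have "... \<le> card F1 + card ((\<lambda>u. u + a) ` F2) + card R2"
      by (metis card_Un_le add_le_mono1 le_trans)
    finally have "card T \<le> 5" using cF1 cimg cR2 by simp
    thus ?thesis unfolding T_def by simp
  qed
qed

theorem theorem2p14:
  fixes \<alpha> :: "'a::{field,finite}" and s m n k :: nat
  assumes "s > 0" and "m > 0" and "n = s * m" and "odd n"
    and "card (UNIV :: 'a set) = 2 ^ n"
    and "k > 0" and "gcd n k = 1"
    and "\<alpha> \<in> subfield2 s" and "\<alpha> \<noteq> 0"
  defines "G \<equiv> (\<lambda>x::'a. x ^ (2 ^ k + 1) + \<alpha> + \<alpha> * (x ^ (2 ^ s) + x) ^ (2 ^ n - 1))"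
  shows "(\<forall>c \<in> subfield2 s - {1}. c_diff_unif G c \<le> 6)
       \<and> (\<not> 3 dvd m \<longrightarrow> (\<forall>c \<in> subfield2 s - {1}. c_diff_unif G c \<le> 5))"
proof -
  have npos: "n > 0" using assms(4) by (intro Nat.gr0I) simp
  have two: "(2::'a) = 0" by (rule char2[OF assms(5) npos])
  have fq: "\<forall>t::'a. t^(2^n) = t" using field_pow_card assms(5) by metis
  have cop: "coprime k n" using assms(7) by (simp add: coprime_iff_gcd_eq_1 gcd.commute)
  have alS: "\<alpha>^(2^s) = \<alpha>" using assms(8) unfolding subfield2_def by simp
  have Gd: "G x = (if x^(2^s) = x then x^(2^k+1) + \<alpha> else x^(2^k+1))" for x
  proof (cases "x^(2^s) = x")
    case True
    have "x^(2^s) + x = 0" using True two by (metis mult_2 mult_zero_left)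
    moreover have "(2::nat)^n - 1 > 0" using npos by (metis one_less_numeral_iff semiring_norm(76) one_less_power zero_less_diff)
    ultimately show ?thesis unfolding G_def using True by simp
  next
    case False
    define v where "v = x^(2^s) + x"
    have v0: "v \<noteq> 0"
    proof
      assume "v = 0"
      hence "x^(2^s) = - x" unfolding v_def by (simp add: eq_neg_iff_add_eq_0)
      thus False using False neg2[OF two, of x] by simp
    qed
    have "v^(2^n - 1) * v = v^(2^n)"
      by (metis power_Suc2 Suc_pred' zero_less_power zero_less_numeral)
    hence "v^(2^n - 1) * v = 1 * v" using fq by simp
    hence "v^(2^n - 1) = 1" using v0 by simp
    moreover have "\<alpha> + \<alpha> = 0" using two by (metis mult_2 mult_zero_left)
    ultimately show ?thesis unfolding G_def using False v_def by simp
  qed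
  have bnd: "c_diff_unif G c \<le> 6 \<and> (\<not> 3 dvd m \<longrightarrow> c_diff_unif G c \<le> 5)" if c: "c \<in> subfield2 s - {1}" for c
  proof -
    have c1: "c \<noteq> 1" and cS: "c^(2^s) = c" using c unfolding subfield2_def by auto
    have cb: "c_delta G c a b \<le> 6 \<and> (\<not> 3 dvd m \<longrightarrow> c_delta G c a b \<le> 5)" for a b
      unfolding c_delta_def by (rule count_bound[OF two fq cop assms(6) assms(3) assms(4) c1 cS alS Gd])
    define A where "A = {c_delta G c a b | a b. a \<noteq> 0 \<or> c \<noteq> 1}"
    have finA: "finite A"
    proof -
      have "A \<subseteq> (\<lambda>p. c_delta G c (fst p) (snd p)) ` UNIV"
      proof
        fix y assume "y \<in> A"
        then obtain a b where "y = c_delta G c a b" unfolding A_def by auto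
        thus "y \<in> (\<lambda>p. c_delta G c (fst p) (snd p)) ` UNIV"
          using rangeI[of "\<lambda>p. c_delta G c (fst p) (snd p)" "(a,b)"] by simp
      qed
      thus ?thesis by (rule finite_subset) simp
    qed
    have neA: "A \<noteq> {}" unfolding A_def using c1 by auto
    have "Max A \<le> 6" using cb finA neA by (intro Max.boundedI) (auto simp: A_def)
    moreover have "Max A \<le> 5" if "\<not> 3 dvd m" using cb finA neA that by (intro Max.boundedI) (auto simp: A_def)
    ultimately show ?thesis unfolding c_diff_unif_def A_def by simp
  qed
  show ?thesis using bnd by blast
qed

end
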